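(* Let $\mathbf{k}=(k_1,\ldots,k_n)$ be a sequence of positive integers. Then in $\mathfrak{h}_t^1$, $$\sum_{\sigma\in S_n}z_{k_{\sigma(1)}}\cdots z_{k_{\sigma(n)}}=\sum_{\Pi=\{P_1,\ldots,P_i\}\in\mathcal{P}_n}c_\Pi(t)\,z_{\mathbf{k},P_1}\ast_t\cdots\ast_t z_{\mathbf{k},P_i},$$ where $z_{\mathbf{k},P_j}=z_{\sum_{l\in P_j}k_l}$.
   Context: $t$ is a formal variable; $\mathfrak{h}_t=\mathbb{Q}[t]\langle x,y\rangle$ is the noncommutative polynomial algebra in letters $x,y$ ($1$ = empty word), $\mathfrak{h}^1_t=\mathbb{Q}[t]+\mathfrak{h}_ty$, $z_k=x^{k-1}y$. For a word $w$, $\delta(w)=1$ if $w=1$ and $0$ otherwise. The $t$-harmonic product $\ast_t$ on $\mathfrak{h}^1_t$ is the $\mathbb{Q}[t]$-bilinear product with $1\ast_t w=w\ast_t1=w$ and, for words $w_1,w_2\in\mathfrak{h}^1_t$ and $k,l\ge1$, $z_kw_1\ast_t z_lw_2=z_k(w_1\ast_t z_lw_2)+z_l(z_kw_1\ast_t w_2)+(1-2t)z_{k+l}(w_1\ast_t w_2)+[1-\delta(w_1)\delta(w_2)](t^2-t)x^{k+l}(w_1\ast_t w_2)$; it is commutative and associative. $S_n$ is the symmetric group, $\mathcal{P}_n$ the set of all set partitions of $\{1,\ldots,n\}$. For $m\ge1$, $c_m(t)=(m-1)!\,[t^m-(t-1)^m]$, and for $\Pi=\{P_1,\ldots,P_i\}\in\mathcal{P}_n$,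 $c_\Pi(t)=\prod_{j=1}^ic_{\#P_j}(t)$. *)

theory Defs
  imports "HOL-Library.Poly_Mapping" "HOL-Computational_Algebra.Polynomial"
    "HOL-Library.Disjoint_Sets" "HOL-Combinatorics.Permutations"
begin

datatype letter = X | Y

abbreviation tvar :: "rat poly" where "tvar \<equiv> [:0, 1:]"

text \<open>Elements of h_t = Q[t]<x,y>: finitely supported maps from words to Q[t].\<close>
type_synonym ht = "letter list \<Rightarrow>\<^sub>0 rat poly"

definition word :: "letter list \<Rightarrow> ht" where
  "word w = Poly_Mapping.single w 1"

definition hsmult :: "rat poly \<Rightarrow> ht \<Rightarrow> ht" where
  "hsmult c f = Poly_Mapping.map (\<lambda>a. c * a) f"

definition hprep :: "letter list \<Rightarrow> ht \<Rightarrow> ht" where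
  "hprep u f = (\<Sum>w\<in>Poly_Mapping.keys f. Poly_Mapping.single (u @ w) (Poly_Mapping.lookup f w))"

definition zl :: "nat \<Rightarrow> letter list" where
  "zl k = replicate (k - 1) X @ [Y]"

definition zword :: "nat list \<Rightarrow> letter list" where
  "zword ks = concat (map zl ks)"

text \<open>Decoding a word of h^1 (ending in y or empty) into its index sequence.\<close>
fun dec_aux :: "nat \<Rightarrow> letter list \<Rightarrow> nat list" where
  "dec_aux c [] = []"
| "dec_aux c (X # w) = dec_aux (Suc c) w"
| "dec_aux c (Y # w) = Suc c # dec_aux 0 w"

definition dec :: "letter list \<Rightarrow> nat list" where
  "dec w = dec_aux 0 w"

text \<open>The t-harmonic product of two words of h^1, given by their index sequences
  (z_k w_1 corresponds to k # w_1).\<close>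
fun tharm :: "nat list \<Rightarrow> nat list \<Rightarrow> ht" where
  "tharm [] v = word (zword v)"
| "tharm u [] = word (zword u)"
| "tharm (k # u) (l # v) =
     hprep (zl k) (tharm u (l # v))
   + hprep (zl l) (tharm (k # u) v)
   + hsmult (1 - 2 * tvar) (hprep (zl (k + l)) (tharm u v))
   + (if u = [] \<and> v = [] then 0
      else hsmult (tvar ^ 2 - tvar) (hprep (replicate (k + l) X) (tharm u v)))"

definition tprod :: "ht \<Rightarrow> ht \<Rightarrow> ht" (infixl "\<star>\<^sub>t" 70) where
  "f \<star>\<^sub>t g = (\<Sum>u\<in>Poly_Mapping.keys f. \<Sum>v\<in>Poly_Mapping.keys g.
      hsmult (Poly_Mapping.lookup f u * Poly_Mapping.lookup g v) (tharm (dec u) (dec v)))"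

definition tprod_list :: "ht list \<Rightarrow> ht" where
  "tprod_list fs = foldr (\<star>\<^sub>t) fs (word [])"

definition cm :: "nat \<Rightarrow> rat poly" where
  "cm m = of_nat (fact (m - 1)) * (tvar ^ m - (tvar - 1) ^ m)"

definition cPi :: "nat set set \<Rightarrow> rat poly" where
  "cPi P = (\<Prod>B\<in>P. cm (card B))"

text \<open>Blocks of a set partition listed by increasing minimum (order is irrelevant
  since the product is commutative, but this makes the iterated product explicit).\<close>
definition blocks_list :: "nat set set \<Rightarrow> nat set list" where
  "blocks_list P = map (\<lambda>m. THE B. B \<in> P \<and> Min B = m) (sorted_list_of_set (Min ` P))"

text \<open>z_{k,B} = z_{sum of k_l over l in B} (indices 0-based).\<close>
definition zblock :: "nat list \<Rightarrow> nat set \<Rightarrow> ht" where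
  "zblock ks B = word (zl (\<Sum>l\<in>B. ks ! l))"

end

theory Submission
  imports Defs "HOL-Combinatorics.Multiset_Permutations"
begin

lemma lookup_hsmult[simp]: "Poly_Mapping.lookup (hsmult c f) w = c * Poly_Mapping.lookup f w"
  unfolding hsmult_def by (simp add: Poly_Mapping.map.rep_eq when_def)

lemma hsmult_add: "hsmult c (f + g) = hsmult c f + hsmult c g"
  by (rule poly_mapping_eqI) (simp add: lookup_add algebra_simps)

lemma hsmult_add_left: "hsmult (c + d) f = hsmult c f + hsmult d f"
  by (rule poly_mapping_eqI) (simp add: lookup_add algebra_simps)

lemma hsmult_zero[simp]: "hsmult c 0 = 0" "hsmult 0 f = 0"
  by (rule poly_mapping_eqI, simp)+

lemma hsmult_one[simp]: "hsmult 1 f = f"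
  by (rule poly_mapping_eqI) simp

lemma hsmult_hsmult: "hsmult c (hsmult d f) = hsmult (c * d) f"
  by (rule poly_mapping_eqI) (simp add: algebra_simps)

lemma hsmult_sum: "hsmult c (sum f A) = (\<Sum>x\<in>A. hsmult c (f x))"
  by (rule poly_mapping_eqI) (simp add: lookup_sum sum_distrib_left)

lemma hsmult_sum_left: "hsmult (sum f A) g = (\<Sum>x\<in>A. hsmult (f x) g)"
  by (rule poly_mapping_eqI) (simp add: lookup_sum sum_distrib_right)

lemma hsmult_single: "hsmult c (Poly_Mapping.single w 1) = Poly_Mapping.single w c"
  by (rule poly_mapping_eqI) (simp add: lookup_single when_def)

definition lin :: "(letter list \<Rightarrow> ht) \<Rightarrow> ht \<Rightarrow> ht" where
  "lin T f = (\<Sum>v\<in>Poly_Mapping.keys f. hsmult (Poly_Mapping.lookup f v) (T v))"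

lemma lin_superset: "finite S \<Longrightarrow> Poly_Mapping.keys f \<subseteq> S \<Longrightarrow> lin T f = (\<Sum>v\<in>S. hsmult (Poly_Mapping.lookup f v) (T v))"
  unfolding lin_def by (rule sum.mono_neutral_left) (auto simp: in_keys_iff)

lemma lin_add: "lin T (f + g) = lin T f + lin T g"
proof -
  let ?S = "Poly_Mapping.keys f \<union> Poly_Mapping.keys g"
  have "lin T (f + g) = (\<Sum>v\<in>?S. hsmult (Poly_Mapping.lookup (f+g) v) (T v))"
    by (rule lin_superset) (use keys_add[of f g] in auto)
  also have "\<dots> = (\<Sum>v\<in>?S. hsmult (Poly_Mapping.lookup f v) (T v)) + (\<Sum>v\<in>?S. hsmult (Poly_Mapping.lookup g v) (T v))"
    by (simp add: lookup_add hsmult_add_left sum.distrib)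
  also have "\<dots> = lin T f + lin T g"
    by (subst (1 2) lin_superset[of ?S]) auto
  finally show ?thesis .
qed

lemma lin_zero[simp]: "lin T 0 = 0"
  by (simp add: lin_def)

lemma lin_sum: "lin T (sum f A) = (\<Sum>x\<in>A. lin T (f x))"
  by (induction A rule: infinite_finite_induct) (auto simp: lin_add)

lemma lin_hsmult: "lin T (hsmult c f) = hsmult c (lin T f)"
proof -
  have "lin T (hsmult c f) = (\<Sum>v\<in>Poly_Mapping.keys f. hsmult (Poly_Mapping.lookup (hsmult c f) v) (T v))"
    by (rule lin_superset) (auto simp: in_keys_iff)
  then show ?thesis by (simp add: lin_def hsmult_sum hsmult_hsmult)
qed

lemma lin_word[simp]: "lin T (word w) = T w"
  by (simp add: lin_def word_def)

lemma hprep_lin: "hprep u = lin (\<lambda>v. word (u @ v))"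
  by (auto simp: fun_eq_iff hprep_def lin_def word_def hsmult_single)

lemma tprod_word: "word a \<star>\<^sub>t g = lin (\<lambda>v. tharm (dec a) (dec v)) g"
  by (simp add: tprod_def word_def lin_def)


lemma hprep_add: "hprep u (f + g) = hprep u f + hprep u g"
  by (simp add: hprep_lin lin_add)
lemma hprep_sum: "hprep u (sum f A) = (\<Sum>x\<in>A. hprep u (f x))"
  by (simp add: hprep_lin lin_sum)
lemma hprep_hsmult: "hprep u (hsmult c f) = hsmult c (hprep u f)"
  by (simp add: hprep_lin lin_hsmult)
lemma hprep_zero[simp]: "hprep u 0 = 0"
  by (simp add: hprep_lin)

abbreviation W :: "nat list \<Rightarrow> ht" where "W u \<equiv> word (zword u)"

lemma hprep_W: "hprep (zl a) (W u) = W (a # u)"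
  by (simp add: hprep_lin zword_def)

lemma hprep_rep: "m > 0 \<Longrightarrow> hprep (replicate n X) (W (m # u)) = W ((n + m) # u)"
proof -
  assume "m > 0"
  then have "replicate n X @ zl m = zl (n + m)"
    by (simp add: zl_def replicate_add[symmetric])
  then show ?thesis by (simp add: hprep_lin zword_def) (metis append.assoc)
qed

lemma dec_aux_rep: "dec_aux c (replicate n X @ Y # w) = Suc (c + n) # dec_aux 0 w"
  by (induction n arbitrary: c) auto

lemma dec_zword: "\<forall>x\<in>set u. x > 0 \<Longrightarrow> dec (zword u) = u"
proof (induction u)
  case Nil then show ?case by (simp add: dec_def zword_def)
next
  case (Cons a u)
  then show ?case
    by (simp add: dec_def zword_def zl_def dec_aux_rep)
qed

lemma dec_zl: "k > 0 \<Longrightarrow> dec (zl k) = [k]"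
  using dec_zword[of "[k]"] by (simp add: zword_def)

lemma tharm_nil_left[simp]: "tharm [] v = W v"
  by simp

lemma tharm_single_nil: "tharm [k] [] = W [k]"
  by simp

lemma tharm_single_cons: "tharm [k] (l # v) =
     W (k # l # v)
   + hprep (zl l) (tharm [k] v)
   + hsmult (1 - 2 * tvar) (W ((k + l) # v))
   + (if v = [] then 0
      else hsmult (tvar ^ 2 - tvar) (hprep (replicate (k + l) X) (W v)))"
  by (simp add: hprep_W)

lemma perm_sum_rec:
  assumes "finite A" "A \<noteq> {}"
  shows "(\<Sum>xs\<in>permutations_of_set A. f xs) = (\<Sum>a\<in>A. \<Sum>xs\<in>permutations_of_set (A - {a}). f (a # xs))"
proof -
  have "(\<Sum>xs\<in>permutations_of_set A. f xs) = (\<Sum>a\<in>A. \<Sum>xs\<in>(#) a ` permutations_of_set (A - {a}). f xs)"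
    unfolding permutations_of_set_nonempty[OF assms(2)]
    by (rule sum.UNION_disjoint) (use assms in auto)
  also have "\<dots> = (\<Sum>a\<in>A. \<Sum>xs\<in>permutations_of_set (A - {a}). f (a # xs))"
    by (rule sum.cong[OF refl], subst sum.reindex) auto
  finally show ?thesis .
qed

definition Perm :: "nat list \<Rightarrow> nat set \<Rightarrow> ht" where
  "Perm ks A = (\<Sum>xs\<in>permutations_of_set A. W (map ((!) ks) xs))"

definition Q :: "nat list \<Rightarrow> nat \<Rightarrow> nat set \<Rightarrow> ht" where
  "Q ks b A = (\<Sum>xs\<in>permutations_of_set A. tharm [b] (map ((!) ks) xs))"

lemma Perm_empty[simp]: "Perm ks {} = W []"
  by (simp add: Perm_def)

lemma Perm_rec: "finite A \<Longrightarrow> A \<noteq> {} \<Longrightarrow> Perm ks A = (\<Sum>a\<in>A. hprep (zl (ks ! a)) (Perm ks (A - {a})))"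
  by (simp add: Perm_def perm_sum_rec hprep_sum hprep_W)



abbreviation "alp \<equiv> (1 - 2 * tvar)"
abbreviation "bet \<equiv> (tvar ^ 2 - tvar)"

lemma Q_rec:
  assumes fin: "finite A" and pos: "\<forall>i\<in>A. ks ! i > 0"
  shows "Q ks b A = hprep (zl b) (Perm ks A)
     + (\<Sum>a\<in>A. hprep (zl (ks ! a)) (Q ks b (A - {a})))
     + hsmult alp (\<Sum>a\<in>A. hprep (zl (b + ks ! a)) (Perm ks (A - {a})))
     + hsmult bet (\<Sum>a\<in>A. \<Sum>a'\<in>A - {a}. hprep (zl (b + ks ! a + ks ! a')) (Perm ks (A - {a} - {a'})))"
proof (cases "A = {}")
  case True
  then show ?thesis by (simp add: Q_def hprep_W)
next
  case False
  have "Q ks b A = (\<Sum>a\<in>A. \<Sum>xs\<in>permutations_of_set (A - {a}). tharm [b] (ks ! a # map ((!) ks) xs))"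
    unfolding Q_def by (simp add: perm_sum_rec[OF fin False])
  also have "\<dots> = (\<Sum>a\<in>A. \<Sum>xs\<in>permutations_of_set (A - {a}).
       W (b # ks ! a # map ((!) ks) xs)
     + hprep (zl (ks ! a)) (tharm [b] (map ((!) ks) xs))
     + hsmult alp (W ((b + ks ! a) # map ((!) ks) xs))
     + (if xs = [] then 0 else hsmult bet (hprep (replicate (b + ks ! a) X) (W (map ((!) ks) xs)))))"
    by (simp only: tharm_single_cons map_is_Nil_conv)
  also have "\<dots> = (\<Sum>a\<in>A. \<Sum>xs\<in>permutations_of_set (A - {a}). W (b # ks ! a # map ((!) ks) xs))
     + (\<Sum>a\<in>A. \<Sum>xs\<in>permutations_of_set (A - {a}). hprep (zl (ks ! a)) (tharm [b] (map ((!) ks) xs)))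
     + (\<Sum>a\<in>A. \<Sum>xs\<in>permutations_of_set (A - {a}). hsmult alp (W ((b + ks ! a) # map ((!) ks) xs)))
     + (\<Sum>a\<in>A. \<Sum>xs\<in>permutations_of_set (A - {a}). (if xs = [] then 0 else hsmult bet (hprep (replicate (b + ks ! a) X) (W (map ((!) ks) xs)))))"
    by (simp only: sum.distrib)
  also have "(\<Sum>a\<in>A. \<Sum>xs\<in>permutations_of_set (A - {a}). W (b # ks ! a # map ((!) ks) xs)) = hprep (zl b) (Perm ks A)"
    by (simp add: perm_sum_rec[OF fin False] Perm_def hprep_sum hprep_W)
  also have "(\<Sum>a\<in>A. \<Sum>xs\<in>permutations_of_set (A - {a}). hprep (zl (ks ! a)) (tharm [b] (map ((!) ks) xs)))
      = (\<Sum>a\<in>A. hprep (zl (ks ! a)) (Q ks b (A - {a})))"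
    by (simp add: Q_def hprep_sum)
  also have "(\<Sum>a\<in>A. \<Sum>xs\<in>permutations_of_set (A - {a}). hsmult alp (W ((b + ks ! a) # map ((!) ks) xs)))
      = hsmult alp (\<Sum>a\<in>A. hprep (zl (b + ks ! a)) (Perm ks (A - {a})))"
    by (simp add: Perm_def hprep_sum hprep_W hsmult_sum)
  also have "(\<Sum>a\<in>A. \<Sum>xs\<in>permutations_of_set (A - {a}). (if xs = [] then 0 else hsmult bet (hprep (replicate (b + ks ! a) X) (W (map ((!) ks) xs)))))
      = hsmult bet (\<Sum>a\<in>A. \<Sum>a'\<in>A - {a}. hprep (zl (b + ks ! a + ks ! a')) (Perm ks (A - {a} - {a'})))"
    unfolding hsmult_sum
  proof (rule sum.cong[OF refl])
    fix a assume "a \<in> A"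
    show "(\<Sum>xs\<in>permutations_of_set (A - {a}). (if xs = [] then 0 else hsmult bet (hprep (replicate (b + ks ! a) X) (W (map ((!) ks) xs)))))
      = (\<Sum>a'\<in>A - {a}. hsmult bet (hprep (zl (b + ks ! a + ks ! a')) (Perm ks (A - {a} - {a'}))))"
    proof (cases "A - {a} = {}")
      case True
      then show ?thesis by (simp only: True permutations_of_set_empty) simp
    next
      case ne: False
      have "(\<Sum>xs\<in>permutations_of_set (A - {a}). (if xs = [] then 0 else hsmult bet (hprep (replicate (b + ks ! a) X) (W (map ((!) ks) xs)))))
        = (\<Sum>a'\<in>A - {a}. \<Sum>ys\<in>permutations_of_set (A - {a} - {a'}). hsmult bet (hprep (replicate (b + ks ! a) X) (W (ks ! a' # map ((!) ks) ys))))"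
        by (simp add: perm_sum_rec[OF _ ne] fin)
      also have "\<dots> = (\<Sum>a'\<in>A - {a}. \<Sum>ys\<in>permutations_of_set (A - {a} - {a'}). hsmult bet (W ((b + ks ! a + ks ! a') # map ((!) ks) ys)))"
        using pos by (intro sum.cong refl) (simp add: hprep_rep)
      also have "\<dots> = (\<Sum>a'\<in>A - {a}. hsmult bet (hprep (zl (b + ks ! a + ks ! a')) (Perm ks (A - {a} - {a'}))))"
        by (simp add: Perm_def hprep_sum hprep_W hsmult_sum)
      finally show ?thesis .
    qed
  qed
  finally show ?thesis .
qed



definition Bs :: "nat \<Rightarrow> nat set \<Rightarrow> nat set set" where
  "Bs a0 A = {B. a0 \<in> B \<and> B \<subseteq> A}"

lemma finite_Bs[simp]: "finite A \<Longrightarrow> finite (Bs a0 A)"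
  unfolding Bs_def by (rule finite_subset[of _ "Pow A"]) auto

lemma reindex1:
  assumes "finite A"
  shows "(\<Sum>B\<in>Bs a0 A. \<Sum>a\<in>A - B. f B a) = (\<Sum>D\<in>Bs a0 A. \<Sum>a\<in>D - {a0}. f (D - {a}) a)"
proof -
  have "(\<Sum>B\<in>Bs a0 A. \<Sum>a\<in>A - B. f B a) = (\<Sum>(B,a)\<in>Sigma (Bs a0 A) (\<lambda>B. A - B). f B a)"
    by (rule sum.Sigma) (use assms in auto)
  also have "\<dots> = (\<Sum>(D,a)\<in>Sigma (Bs a0 A) (\<lambda>D. D - {a0}). f (D - {a}) a)"
    by (rule sum.reindex_bij_witness[where i="\<lambda>(D,a). (D - {a}, a)" and j="\<lambda>(B,a). (insert a B, a)"])
       (auto simp: Bs_def)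
  also have "\<dots> = (\<Sum>D\<in>Bs a0 A. \<Sum>a\<in>D - {a0}. f (D - {a}) a)"
    by (rule sum.Sigma[symmetric]) (use assms in \<open>auto simp: Bs_def intro: finite_subset\<close>)
  finally show ?thesis .
qed

lemma reindex2:
  assumes "finite A"
  shows "(\<Sum>B\<in>Bs a0 A. \<Sum>a\<in>A - B. \<Sum>a'\<in>A - B - {a}. f B a a')
       = (\<Sum>D\<in>Bs a0 A. \<Sum>a\<in>D - {a0}. \<Sum>a'\<in>D - {a0} - {a}. f (D - {a, a'}) a a')"
proof -
  have "(\<Sum>B\<in>Bs a0 A. \<Sum>a\<in>A - B. \<Sum>a'\<in>A - B - {a}. f B a a')
      = (\<Sum>B\<in>Bs a0 A. \<Sum>(a,a')\<in>Sigma (A - B) (\<lambda>a. A - B - {a}). f B a a')"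
    by (rule sum.cong[OF refl], rule sum.Sigma) (use assms in auto)
  also have "\<dots> = (\<Sum>(B,aa)\<in>Sigma (Bs a0 A) (\<lambda>B. Sigma (A - B) (\<lambda>a. A - B - {a})). f B (fst aa) (snd aa))"
    by (subst sum.Sigma) (use assms in \<open>auto simp: case_prod_beta\<close>)
  also have "\<dots> = (\<Sum>(D,aa)\<in>Sigma (Bs a0 A) (\<lambda>D. Sigma (D - {a0}) (\<lambda>a. D - {a0} - {a})). f (D - {fst aa, snd aa}) (fst aa) (snd aa))"
    by (rule sum.reindex_bij_witness[where i="\<lambda>(D,aa). (D - {fst aa, snd aa}, aa)" and j="\<lambda>(B,aa). (insert (fst aa) (insert (snd aa) B), aa)"])
       (auto simp: Bs_def)
  also have "\<dots> = (\<Sum>D\<in>Bs a0 A. \<Sum>(a,a')\<in>Sigma (D - {a0}) (\<lambda>a. D - {a0} - {a}). f (D - {a, a'}) a a')"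
    by (subst sum.Sigma) (use assms in \<open>auto simp: case_prod_beta Bs_def intro: finite_subset\<close>)
  also have "\<dots> = (\<Sum>D\<in>Bs a0 A. \<Sum>a\<in>D - {a0}. \<Sum>a'\<in>D - {a0} - {a}. f (D - {a, a'}) a a')"
    by (rule sum.cong[OF refl], rule sum.Sigma[symmetric]) (use assms in \<open>auto simp: Bs_def intro: finite_subset\<close>)
  finally show ?thesis .
qed

lemma swap1:
  assumes "finite A" "a0 \<in> A"
  shows "(\<Sum>B\<in>Bs a0 A. \<Sum>a\<in>A - B. f B a) = (\<Sum>a\<in>A - {a0}. \<Sum>B\<in>Bs a0 (A - {a}). f B a)"
proof -
  have "(\<Sum>B\<in>Bs a0 A. \<Sum>a\<in>A - B. f B a) = (\<Sum>(B,a)\<in>Sigma (Bs a0 A) (\<lambda>B. A - B). f B a)"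
    by (rule sum.Sigma) (use assms in auto)
  also have "\<dots> = (\<Sum>(a,B)\<in>Sigma (A - {a0}) (\<lambda>a. Bs a0 (A - {a})). f B a)"
    by (rule sum.reindex_bij_witness[where i="\<lambda>(a,B). (B, a)" and j="\<lambda>(B,a). (a, B)"])
       (auto simp: Bs_def)
  also have "\<dots> = (\<Sum>a\<in>A - {a0}. \<Sum>B\<in>Bs a0 (A - {a}). f B a)"
    by (rule sum.Sigma[symmetric]) (use assms in auto)
  finally show ?thesis .
qed



lemma a_rec: "(x::'a::comm_ring_1)^(m+3) - (x-1)^(m+3) + (1-2*x)*(x^(m+2)-(x-1)^(m+2)) + (x^2-x)*(x^(m+1)-(x-1)^(m+1)) = 0"
proof -
  have e: "x^(m+3) = x^(m+1)*x*x" "x^(m+2) = x^(m+1)*x" "(x-1)^(m+3) = (x-1)^(m+1)*(x-1)*(x-1)" "(x-1)^(m+2) = (x-1)^(m+1)*(x-1)"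
    by (simp_all add: power_add eval_nat_numeral algebra_simps)
  show ?thesis unfolding e by (simp add: power2_eq_square algebra_simps)
qed
lemma sq_id: "(x::'a::comm_ring_1)^2 - (x-1)^2 + (1-2*x) = 0" by (simp add: power2_eq_square algebra_simps)
lemma comb3: "(F::'a::comm_ring_1)*x + y*(F*z) + w*(F*u) = F*(x + y*z + w*u)" by (simp add: algebra_simps)

lemma coef:
  assumes "d \<ge> 1"
  shows "cm d + alp * of_nat (d - 1) * cm (d - 1) + bet * of_nat ((d - 1) * (d - 2)) * cm (d - 2) = (if d = 1 then 1 else 0)"
proof -
  consider "d = 1" | "d = 2" | m where "d = m + 3"
  proof -
    have "d = 1 \<or> d = 2 \<or> d = (d - 3) + 3" using assms by arith
    then show thesis using that by blast
  qed
  then show ?thesis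
  proof cases
    case 1 then show ?thesis by (simp add: cm_def)
  next
    case 2
    have c1: "cm 1 = 1" by (simp add: cm_def)
    have c2: "cm 2 = tvar^2 - (tvar-1)^2" unfolding cm_def by simp
    have "cm d + alp * of_nat (d-1) * cm (d-1) + bet * of_nat ((d-1)*(d-2)) * cm (d-2) = cm 2 + alp * cm 1"
      using 2 by simp
    also have "\<dots> = 0" unfolding c1 c2 by (simp only: mult_1_right sq_id)
    finally show ?thesis using 2 by simp
  next
    case 3
    define F where "F = (of_nat (fact (m + 2)) :: rat poly)"
    define a where "a = (\<lambda>j. tvar^j - (tvar - 1)^j :: rat poly)"
    have f1: "(fact (m + 2) :: nat) = (m + 2) * fact (m + 1)"
      using fact_Suc[of "m+1"] by simp
    have f2: "(fact (m + 2) :: nat) = ((m + 2) * (m + 1)) * fact m"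
      using fact_Suc[of "m+1"] fact_Suc[of m] by (simp add: algebra_simps)
    have m3: "cm (m+3) = of_nat (fact (m + 2)) * (tvar^(m+3) - (tvar - 1)^(m+3))"
      unfolding cm_def by simp
    have m2: "cm (m+2) = of_nat (fact (m + 1)) * (tvar^(m+2) - (tvar - 1)^(m+2))"
      unfolding cm_def by simp
    have m1: "cm (m+1) = of_nat (fact m) * (tvar^(m+1) - (tvar - 1)^(m+1))"
      unfolding cm_def by simp
    have d1: "d - 1 = m + 2" "d - 2 = m + 1" "(d - 1) * (d - 2) = (m + 2) * (m + 1)" using 3 by auto
    have c1: "cm d = F * a (m+3)" unfolding 3 m3 F_def a_def by (rule refl)
    have c2: "of_nat (d - 1) * cm (d - 1) = F * a (m+2)"
      unfolding d1 m2 F_def a_def f1 of_nat_mult by (simp only: mult.assoc)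
    have c3: "of_nat ((d - 1) * (d - 2)) * cm (d - 2) = F * a (m+1)"
      unfolding d1 m1 F_def a_def f2 of_nat_mult by (simp only: mult.assoc)
    have "cm d + alp * of_nat (d - 1) * cm (d - 1) + bet * of_nat ((d - 1) * (d - 2)) * cm (d - 2)
      = F * (a (m+3) + alp * a (m+2) + bet * a (m+1))"
      unfolding mult.assoc[of alp] mult.assoc[of bet] c1 c2 c3 by (rule comb3)
    also have "\<dots> = 0" unfolding a_def by (simp only: a_rec mult_zero_right)
    finally show ?thesis using 3 by simp
  qed
qed


definition sB :: "nat list \<Rightarrow> nat set \<Rightarrow> nat" where
  "sB ks B = (\<Sum>l\<in>B. ks ! l)"

definition FF :: "nat list \<Rightarrow> nat \<Rightarrow> nat set \<Rightarrow> ht" where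
  "FF ks a0 A = (\<Sum>B\<in>Bs a0 A. hsmult (cm (card B)) (Q ks (sB ks B) (A - B)))"

lemma sum_hsmult_const: "(\<Sum>x\<in>S. hsmult c f) = hsmult (of_nat (card S) * c) f"
  by (simp add: hsmult_sum_left[symmetric])

lemma FF_eq:
  assumes "finite A" "a0 \<in> A" "\<forall>i\<in>A. ks ! i > 0"
  shows "FF ks a0 A = Perm ks A"
  using assms
proof (induction A rule: finite_psubset_induct)
  case (psubset A)
  note fin = psubset.hyps(1) and a0 = psubset.prems(1) and pos = psubset.prems(2)
  define H where "H D = hprep (zl (sB ks D)) (Perm ks (A - D))" for D
  define S2 where "S2 = (\<Sum>B\<in>Bs a0 A. \<Sum>a\<in>A - B. hsmult (cm (card B)) (hprep (zl (ks ! a)) (Q ks (sB ks B) (A - B - {a}))))"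
  define S3 where "S3 = (\<Sum>B\<in>Bs a0 A. \<Sum>a\<in>A - B. hsmult (cm (card B)) (hprep (zl (sB ks B + ks ! a)) (Perm ks (A - B - {a}))))"
  define S4 where "S4 = (\<Sum>B\<in>Bs a0 A. \<Sum>a\<in>A - B. \<Sum>a'\<in>A - B - {a}. hsmult (cm (card B)) (hprep (zl (sB ks B + ks ! a + ks ! a')) (Perm ks (A - B - {a} - {a'}))))"
  have step1: "FF ks a0 A = (\<Sum>D\<in>Bs a0 A. hsmult (cm (card D)) (H D)) + S2 + hsmult alp S3 + hsmult bet S4"
  proof -
    have "FF ks a0 A = (\<Sum>B\<in>Bs a0 A. hsmult (cm (card B)) (H B)
        + (\<Sum>a\<in>A - B. hsmult (cm (card B)) (hprep (zl (ks ! a)) (Q ks (sB ks B) (A - B - {a}))))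
        + hsmult alp (\<Sum>a\<in>A - B. hsmult (cm (card B)) (hprep (zl (sB ks B + ks ! a)) (Perm ks (A - B - {a}))))
        + hsmult bet (\<Sum>a\<in>A - B. \<Sum>a'\<in>A - B - {a}. hsmult (cm (card B)) (hprep (zl (sB ks B + ks ! a + ks ! a')) (Perm ks (A - B - {a} - {a'})))))"
      unfolding FF_def
    proof (rule sum.cong[OF refl])
      fix B assume "B \<in> Bs a0 A"
      have "Q ks (sB ks B) (A - B) = H B
        + (\<Sum>a\<in>A - B. hprep (zl (ks ! a)) (Q ks (sB ks B) (A - B - {a})))
        + hsmult alp (\<Sum>a\<in>A - B. hprep (zl (sB ks B + ks ! a)) (Perm ks (A - B - {a})))
        + hsmult bet (\<Sum>a\<in>A - B. \<Sum>a'\<in>A - B - {a}. hprep (zl (sB ks B + ks ! a + ks ! a')) (Perm ks (A - B - {a} - {a'})))"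
        unfolding H_def by (rule Q_rec) (use fin pos in auto)
      then show "hsmult (cm (card B)) (Q ks (sB ks B) (A - B)) = hsmult (cm (card B)) (H B)
        + (\<Sum>a\<in>A - B. hsmult (cm (card B)) (hprep (zl (ks ! a)) (Q ks (sB ks B) (A - B - {a}))))
        + hsmult alp (\<Sum>a\<in>A - B. hsmult (cm (card B)) (hprep (zl (sB ks B + ks ! a)) (Perm ks (A - B - {a}))))
        + hsmult bet (\<Sum>a\<in>A - B. \<Sum>a'\<in>A - B - {a}. hsmult (cm (card B)) (hprep (zl (sB ks B + ks ! a + ks ! a')) (Perm ks (A - B - {a} - {a'}))))"
        by (simp only: hsmult_add hsmult_sum hsmult_hsmult mult.commute)
    qed
    also have "\<dots> = (\<Sum>D\<in>Bs a0 A. hsmult (cm (card D)) (H D)) + S2 + hsmult alp S3 + hsmult bet S4"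
      unfolding S2_def S3_def S4_def by (simp only: sum.distrib hsmult_sum)
    finally show ?thesis .
  qed
  have S2: "S2 = (\<Sum>a\<in>A - {a0}. hprep (zl (ks ! a)) (Perm ks (A - {a})))"
  proof -
    have "S2 = (\<Sum>a\<in>A - {a0}. \<Sum>B\<in>Bs a0 (A - {a}). hsmult (cm (card B)) (hprep (zl (ks ! a)) (Q ks (sB ks B) (A - B - {a}))))"
      unfolding S2_def by (rule swap1[OF fin a0])
    also have "\<dots> = (\<Sum>a\<in>A - {a0}. hprep (zl (ks ! a)) (FF ks a0 (A - {a})))"
      unfolding FF_def hprep_sum hprep_hsmult by (intro sum.cong refl) (metis Diff_insert Diff_insert2)
    also have "\<dots> = (\<Sum>a\<in>A - {a0}. hprep (zl (ks ! a)) (Perm ks (A - {a})))"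
    proof (intro sum.cong refl)
      fix a assume "a \<in> A - {a0}"
      then have "FF ks a0 (A - {a}) = Perm ks (A - {a})"
        by (intro psubset.IH) (use a0 pos in auto)
      then show "hprep (zl (ks ! a)) (FF ks a0 (A - {a})) = hprep (zl (ks ! a)) (Perm ks (A - {a}))" by simp
    qed
    finally show ?thesis .
  qed
  have S3: "S3 = (\<Sum>D\<in>Bs a0 A. hsmult (of_nat (card D - 1) * cm (card D - 1)) (H D))"
  proof -
    have "S3 = (\<Sum>D\<in>Bs a0 A. \<Sum>a\<in>D - {a0}. hsmult (cm (card (D - {a}))) (hprep (zl (sB ks (D - {a}) + ks ! a)) (Perm ks (A - (D - {a}) - {a}))))"
      unfolding S3_def by (rule reindex1[OF fin])
    also have "\<dots> = (\<Sum>D\<in>Bs a0 A. \<Sum>a\<in>D - {a0}. hsmult (cm (card D - 1)) (H D))"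
    proof (intro sum.cong refl)
      fix D a assume D: "D \<in> Bs a0 A" and a: "a \<in> D - {a0}"
      have finD: "finite D" using D fin by (auto simp: Bs_def intro: finite_subset)
      have "card (D - {a}) = card D - 1" using a finD by simp
      moreover have "sB ks (D - {a}) + ks ! a = sB ks D"
        unfolding sB_def using a finD sum.remove[of D a "(!) ks"] by simp
      moreover have "A - (D - {a}) - {a} = A - D" using a by auto
      ultimately show "hsmult (cm (card (D - {a}))) (hprep (zl (sB ks (D - {a}) + ks ! a)) (Perm ks (A - (D - {a}) - {a}))) = hsmult (cm (card D - 1)) (H D)"
        unfolding H_def by simp
    qed
    also have "\<dots> = (\<Sum>D\<in>Bs a0 A. hsmult (of_nat (card D - 1) * cm (card D - 1)) (H D))"
    proof (intro sum.cong refl)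
      fix D assume D: "D \<in> Bs a0 A"
      have finD: "finite D" using D fin by (auto simp: Bs_def intro: finite_subset)
      have "card (D - {a0}) = card D - 1" using D finD by (simp add: Bs_def)
      then show "(\<Sum>a\<in>D - {a0}. hsmult (cm (card D - 1)) (H D)) = hsmult (of_nat (card D - 1) * cm (card D - 1)) (H D)"
        by (simp add: sum_hsmult_const)
    qed
    finally show ?thesis .
  qed
  have S4: "S4 = (\<Sum>D\<in>Bs a0 A. hsmult (of_nat ((card D - 1) * (card D - 2)) * cm (card D - 2)) (H D))"
  proof -
    have "S4 = (\<Sum>D\<in>Bs a0 A. \<Sum>a\<in>D - {a0}. \<Sum>a'\<in>D - {a0} - {a}. hsmult (cm (card (D - {a, a'}))) (hprep (zl (sB ks (D - {a, a'}) + ks ! a + ks ! a')) (Perm ks (A - (D - {a, a'}) - {a} - {a'}))))"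
      unfolding S4_def by (rule reindex2[OF fin])
    also have "\<dots> = (\<Sum>D\<in>Bs a0 A. \<Sum>a\<in>D - {a0}. \<Sum>a'\<in>D - {a0} - {a}. hsmult (cm (card D - 2)) (H D))"
    proof (intro sum.cong refl)
      fix D a a' assume D: "D \<in> Bs a0 A" and a: "a \<in> D - {a0}" and a': "a' \<in> D - {a0} - {a}"
      have finD: "finite D" using D fin by (auto simp: Bs_def intro: finite_subset)
      have "card (D - {a, a'}) = card D - 2" using a a' finD
        by (simp add: card_Diff_subset)
      moreover have "sB ks (D - {a, a'}) + ks ! a + ks ! a' = sB ks D"
      proof -
        have "sB ks D = ks ! a + sB ks (D - {a})"
          unfolding sB_def using a finD sum.remove[of D a "(!) ks"] by simp
        also have "sB ks (D - {a}) = ks ! a' + sB ks (D - {a} - {a'})"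
          unfolding sB_def using a' finD sum.remove[of "D - {a}" a' "(!) ks"] by simp
        finally show ?thesis by (simp add: Diff_insert2[symmetric] insert_commute)
      qed
      moreover have "A - (D - {a, a'}) - {a} - {a'} = A - D" using a a' by auto
      ultimately show "hsmult (cm (card (D - {a, a'}))) (hprep (zl (sB ks (D - {a, a'}) + ks ! a + ks ! a')) (Perm ks (A - (D - {a, a'}) - {a} - {a'}))) = hsmult (cm (card D - 2)) (H D)"
        unfolding H_def by simp
    qed
    also have "\<dots> = (\<Sum>D\<in>Bs a0 A. hsmult (of_nat ((card D - 1) * (card D - 2)) * cm (card D - 2)) (H D))"
    proof (intro sum.cong refl)
      fix D assume D: "D \<in> Bs a0 A"
      have finD: "finite D" using D fin by (auto simp: Bs_def intro: finite_subset)
      have c1: "card (D - {a0}) = card D - 1" using D finD by (simp add: Bs_def)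
      have "(\<Sum>a\<in>D - {a0}. \<Sum>a'\<in>D - {a0} - {a}. hsmult (cm (card D - 2)) (H D))
          = (\<Sum>a\<in>D - {a0}. hsmult (of_nat (card D - 2) * cm (card D - 2)) (H D))"
      proof (intro sum.cong refl)
        fix a assume "a \<in> D - {a0}"
        then have "card (D - {a0} - {a}) = card D - 2" using c1 finD by simp
        then show "(\<Sum>a'\<in>D - {a0} - {a}. hsmult (cm (card D - 2)) (H D)) = hsmult (of_nat (card D - 2) * cm (card D - 2)) (H D)"
          by (simp add: sum_hsmult_const)
      qed
      also have "\<dots> = hsmult (of_nat ((card D - 1) * (card D - 2)) * cm (card D - 2)) (H D)"
        by (simp add: sum_hsmult_const c1 mult.assoc)
      finally show "(\<Sum>a\<in>D - {a0}. \<Sum>a'\<in>D - {a0} - {a}. hsmult (cm (card D - 2)) (H D)) = hsmult (of_nat ((card D - 1) * (card D - 2)) * cm (card D - 2)) (H D)" .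
    qed
    finally show ?thesis .
  qed
  have comb: "(\<Sum>D\<in>Bs a0 A. hsmult (cm (card D)) (H D)) + hsmult alp S3 + hsmult bet S4 = H {a0}"
  proof -
    have "(\<Sum>D\<in>Bs a0 A. hsmult (cm (card D)) (H D)) + hsmult alp S3 + hsmult bet S4
      = (\<Sum>D\<in>Bs a0 A. hsmult (cm (card D) + alp * of_nat (card D - 1) * cm (card D - 1) + bet * of_nat ((card D - 1) * (card D - 2)) * cm (card D - 2)) (H D))"
      unfolding S3 S4 hsmult_sum hsmult_hsmult by (simp only: sum.distrib[symmetric] hsmult_add_left mult.assoc)
    also have "\<dots> = (\<Sum>D\<in>Bs a0 A. if D = {a0} then H D else 0)"
    proof (intro sum.cong refl)
      fix D assume D: "D \<in> Bs a0 A"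
      have finD: "finite D" using D fin by (auto simp: Bs_def intro: finite_subset)
      have "card D \<ge> 1" using D finD by (auto simp: Bs_def Suc_le_eq card_gt_0_iff)
      moreover have "card D = 1 \<longleftrightarrow> D = {a0}" using D by (auto simp: Bs_def card_1_singleton_iff)
      ultimately show "hsmult (cm (card D) + alp * of_nat (card D - 1) * cm (card D - 1) + bet * of_nat ((card D - 1) * (card D - 2)) * cm (card D - 2)) (H D) = (if D = {a0} then H D else 0)"
        by (simp only: coef) auto
    qed
    also have "\<dots> = H {a0}"
      using a0 fin by (simp add: sum.delta' Bs_def)
    finally show ?thesis .
  qed
  have "FF ks a0 A = H {a0} + S2"
    using step1 comb by (simp add: algebra_simps)
  also have "\<dots> = Perm ks A"
  proof -
    have ne: "A \<noteq> {}" using a0 by auto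
    show ?thesis
      unfolding S2 H_def Perm_rec[OF fin ne, of ks] sum.remove[OF fin a0, of "\<lambda>a. hprep (zl (ks ! a)) (Perm ks (A - {a}))"]
      by (simp add: sB_def)
  qed
  finally show ?case .
qed



definition RHS :: "nat list \<Rightarrow> nat set \<Rightarrow> ht" where
  "RHS ks A = (\<Sum>P\<in>{P. partition_on A P}. hsmult (cPi P) (tprod_list (map (zblock ks) (blocks_list P))))"

lemma blocks_list_insert:
  assumes fin: "finite A" and a0: "a0 = Min A" and B: "a0 \<in> B" "B \<subseteq> A" and P': "partition_on (A - B) P'"
  shows "blocks_list (insert B P') = B # blocks_list P'"
proof -
  have finP': "finite P'" using finite_elements[OF _ P'] fin by simp
  have finB: "finite B" using B fin by (auto intro: finite_subset)
  have mins: "a0 < Min C" if "C \<in> P'" for C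
  proof -
    have "C \<noteq> {}" using partition_onD3[OF P'] that by auto
    moreover have "C \<subseteq> A - B" using partition_onD1[OF P'] that by auto
    moreover have "finite C" using calculation fin by (auto intro: finite_subset)
    ultimately have "Min C \<in> A" "Min C \<notin> B" using Min_in by blast+
    then have "a0 \<le> Min C" "Min C \<noteq> a0" using a0 fin B by auto
    then show ?thesis by simp
  qed
  have MinB: "Min B = a0"
    using Min_le[OF finB B(1)] Min_le[OF fin, of "Min B"] Min_in[OF finB] B a0 by force
  have M: "Min ` insert B P' = insert a0 (Min ` P')" using MinB by simp
  have a0M: "\<forall>m\<in>Min ` P'. a0 < m" using mins by auto
  have sl: "sorted_list_of_set (insert a0 (Min ` P')) = a0 # sorted_list_of_set (Min ` P')"
  proof -
    have "Min (insert a0 (Min ` P')) = a0"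
      using a0M finP' by (intro Min_eqI) (auto simp: less_imp_le)
    moreover have "insert a0 (Min ` P') - {a0} = Min ` P'" using a0M by auto
    ultimately show ?thesis using finP' by (subst sorted_list_of_set_nonempty) auto
  qed
  have the0: "(THE C. C \<in> insert B P' \<and> Min C = a0) = B"
    by (rule the_equality) (use MinB mins in fastforce)+
  have the1: "(THE C. C \<in> insert B P' \<and> Min C = m) = (THE C. C \<in> P' \<and> Min C = m)" if "m \<in> Min ` P'" for m
  proof -
    have "(\<lambda>C. C \<in> insert B P' \<and> Min C = m) = (\<lambda>C. C \<in> P' \<and> Min C = m)"
      by (intro ext) (use that a0M MinB in force)
    then show ?thesis by simp
  qed
  show ?thesis
    unfolding blocks_list_def M sl using the0 the1 finP' by simp
qed

lemma B_notin:
  assumes "a0 \<in> B" "partition_on (A - B) P'"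
  shows "B \<notin> P'"
  using assms partition_onD1[OF assms(2)] by auto

lemma cPi_insert:
  assumes "finite P'" "B \<notin> P'"
  shows "cPi (insert B P') = cm (card B) * cPi P'"
  using assms by (simp add: cPi_def)

lemma blk_ex:
  assumes "partition_on A P" "a0 \<in> A"
  shows "\<exists>!C. C \<in> P \<and> a0 \<in> C"
proof -
  obtain C where "C \<in> P" "a0 \<in> C" using partition_onD1[OF assms(1)] assms(2) by auto
  moreover have "C' = C" if "C' \<in> P" "a0 \<in> C'" for C'
    using partition_onD2[OF assms(1)] that calculation unfolding disjoint_def by blast
  ultimately show ?thesis by blast
qed

lemma partition_remove:
  assumes "partition_on A P" "C \<in> P"
  shows "partition_on (A - C) (P - {C})"
proof -
  have P: "P = insert C (P - {C})" using assms(2) by auto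
  have "disjnt C (\<Union>(P - {C}))"
    using partition_onD2[OF assms(1)] assms(2) unfolding disjoint_def disjnt_def by blast
  then show ?thesis using assms(1) partition_on_insert[of C "P - {C}" A] P by auto
qed

lemma tprod_list_cons: "tprod_list (x # xs) = x \<star>\<^sub>t tprod_list xs"
  by (simp add: tprod_list_def)

lemma zblock_word: "zblock ks B = word (zl (sB ks B))"
  by (simp add: zblock_def sB_def)

lemma RHS_rec:
  assumes fin: "finite A" and ne: "A \<noteq> {}"
  shows "RHS ks A = (\<Sum>B\<in>Bs (Min A) A. hsmult (cm (card B)) (zblock ks B \<star>\<^sub>t RHS ks (A - B)))"
proof -
  define a0 where "a0 = Min A"
  have a0A: "a0 \<in> A" using fin ne by (simp add: a0_def)
  define blk where "blk P = (THE C. C \<in> P \<and> a0 \<in> C)" for P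
  define g where "g P = hsmult (cPi P) (tprod_list (map (zblock ks) (blocks_list P)))" for P
  have blk: "blk P \<in> P \<and> a0 \<in> blk P" if "partition_on A P" for P
    unfolding blk_def using theI'[OF blk_ex[OF that a0A]] .
  have "RHS ks A = (\<Sum>P\<in>{P. partition_on A P}. g P)" by (simp add: RHS_def g_def)
  also have "\<dots> = (\<Sum>(B,P')\<in>Sigma (Bs a0 A) (\<lambda>B. {P'. partition_on (A - B) P'}). g (insert B P'))"
  proof (rule sum.reindex_bij_witness[where j="\<lambda>P. (blk P, P - {blk P})" and i="\<lambda>(B,P'). insert B P'"], goal_cases)
    case (3 a)
    then obtain B P' where a: "a = (B, P')" "a0 \<in> B" "B \<subseteq> A" "partition_on (A - B) P'" by (auto simp: Bs_def)
    have "B \<notin> P'" using B_notin[OF a(2) a(4)] .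
    moreover have "blk (insert B P') = B"
      unfolding blk_def by (rule the_equality) (use a partition_onD1[OF a(4)] in auto)
    ultimately show ?case using a by auto
  next
    case (4 a)
    then obtain B P' where a: "a = (B, P')" "a0 \<in> B" "B \<subseteq> A" "partition_on (A - B) P'" by (auto simp: Bs_def)
    have "\<Union>P' = A - B" using partition_onD1[OF a(4)] by simp
    then have "disjnt B (\<Union>P')" by (simp add: disjnt_def Int_Diff)
    then show ?case using a partition_on_insert[of B P' A] by auto
  next
    case (1 P)
    then show ?case using blk[of P] by auto
  next
    case (2 P)
    then have "partition_on A P" by simp
    then show ?case using blk[of P] partition_remove[of A P "blk P"] partition_onD1[of A P]
      by (auto simp: Bs_def)
  next
    case (5 P)
    then have "insert (blk P) (P - {blk P}) = P" using blk[of P] by auto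
    then show ?case by simp
  qed
  also have "\<dots> = (\<Sum>B\<in>Bs a0 A. \<Sum>P'\<in>{P'. partition_on (A - B) P'}. g (insert B P'))"
    by (rule sum.Sigma[symmetric]) (use fin in \<open>auto intro: finitely_many_partition_on\<close>)
  also have "\<dots> = (\<Sum>B\<in>Bs a0 A. hsmult (cm (card B)) (zblock ks B \<star>\<^sub>t RHS ks (A - B)))"
  proof (intro sum.cong refl)
    fix B assume B: "B \<in> Bs a0 A"
    have "(\<Sum>P'\<in>{P'. partition_on (A - B) P'}. g (insert B P'))
        = (\<Sum>P'\<in>{P'. partition_on (A - B) P'}. hsmult (cm (card B)) (zblock ks B \<star>\<^sub>t hsmult (cPi P') (tprod_list (map (zblock ks) (blocks_list P')))))"
    proof (intro sum.cong refl)
      fix P' assume "P' \<in> {P'. partition_on (A - B) P'}"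
      then have P': "partition_on (A - B) P'" by simp
      have finP': "finite P'" using finite_elements[OF _ P'] fin by simp
      have Bn: "B \<notin> P'" using B_notin[OF _ P'] B by (auto simp: Bs_def)
      have bl: "blocks_list (insert B P') = B # blocks_list P'"
        using blocks_list_insert[OF fin a0_def _ _ P'] B by (auto simp: Bs_def)
      show "g (insert B P') = hsmult (cm (card B)) (zblock ks B \<star>\<^sub>t hsmult (cPi P') (tprod_list (map (zblock ks) (blocks_list P'))))"
        unfolding g_def bl cPi_insert[OF finP' Bn] zblock_word tprod_word lin_hsmult
        by (simp add: tprod_list_cons tprod_word hsmult_hsmult)
    qed
    also have "\<dots> = hsmult (cm (card B)) (zblock ks B \<star>\<^sub>t RHS ks (A - B))"
      unfolding RHS_def zblock_word tprod_word lin_sum hsmult_sum by simp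
    finally show "(\<Sum>P'\<in>{P'. partition_on (A - B) P'}. g (insert B P')) = hsmult (cm (card B)) (zblock ks B \<star>\<^sub>t RHS ks (A - B))" .
  qed
  finally show ?thesis unfolding a0_def .
qed


lemma sB_pos: "finite B \<Longrightarrow> B \<noteq> {} \<Longrightarrow> \<forall>i\<in>B. ks ! i > 0 \<Longrightarrow> sB ks B > 0"
  unfolding sB_def by (metis all_not_in_conv sum_pos)

lemma zblock_Perm:
  assumes "finite B" "B \<noteq> {}" "\<forall>i\<in>B. ks ! i > 0" "\<forall>i\<in>A'. ks ! i > 0"
  shows "zblock ks B \<star>\<^sub>t Perm ks A' = Q ks (sB ks B) A'"
proof -
  have d: "dec (zl (sB ks B)) = [sB ks B]" using sB_pos[OF assms(1-3)] by (rule dec_zl)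
  have "dec (zword (map ((!) ks) xs)) = map ((!) ks) xs" if "xs \<in> permutations_of_set A'" for xs
    using that assms(4) by (intro dec_zword) (auto dest: permutations_of_setD)
  then show ?thesis
    unfolding zblock_word tprod_word Perm_def lin_sum lin_word d Q_def by (intro sum.cong refl) simp
qed

lemma RHS_Perm:
  assumes "finite A" "\<forall>i\<in>A. ks ! i > 0"
  shows "RHS ks A = Perm ks A"
  using assms
proof (induction A rule: finite_psubset_induct)
  case (psubset A)
  note fin = psubset.hyps(1) and pos = psubset.prems(1)
  show ?case
  proof (cases "A = {}")
    case True
    have e: "{P. partition_on {} P} = {{}}" by (auto simp: partition_on_empty)
    show ?thesis unfolding True RHS_def e
      by (simp add: cPi_def blocks_list_def tprod_list_def zword_def)
  next
    case ne: False
    define a0 where "a0 = Min A"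
    have a0: "a0 \<in> A" using fin ne by (simp add: a0_def)
    have "RHS ks A = (\<Sum>B\<in>Bs a0 A. hsmult (cm (card B)) (zblock ks B \<star>\<^sub>t RHS ks (A - B)))"
      unfolding a0_def by (rule RHS_rec[OF fin ne])
    also have "\<dots> = (\<Sum>B\<in>Bs a0 A. hsmult (cm (card B)) (Q ks (sB ks B) (A - B)))"
    proof (intro sum.cong refl)
      fix B assume B: "B \<in> Bs a0 A"
      have "RHS ks (A - B) = Perm ks (A - B)"
        by (rule psubset.IH) (use B a0 pos in \<open>auto simp: Bs_def\<close>)
      moreover have "zblock ks B \<star>\<^sub>t Perm ks (A - B) = Q ks (sB ks B) (A - B)"
        by (rule zblock_Perm) (use B fin pos in \<open>auto simp: Bs_def intro: finite_subset\<close>)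
      ultimately show "hsmult (cm (card B)) (zblock ks B \<star>\<^sub>t RHS ks (A - B)) = hsmult (cm (card B)) (Q ks (sB ks B) (A - B))"
        by simp
    qed
    also have "\<dots> = FF ks a0 A" by (simp add: FF_def)
    also have "\<dots> = Perm ks A" by (rule FF_eq[OF fin a0 pos])
    finally show ?thesis .
  qed
qed

lemma LHS_Perm:
  "(\<Sum>\<sigma>\<in>{\<sigma>. \<sigma> permutes {0..<length ks}}. word (zword (map (\<lambda>i. ks ! \<sigma> i) [0..<length ks])))
    = Perm ks {0..<length ks}"
  unfolding Perm_def
proof (rule sum.reindex_bij_witness[where j="\<lambda>\<sigma>. map \<sigma> [0..<length ks]"
      and i="\<lambda>xs k. if k < length ks then xs ! k else k"], goal_cases)
  case (1 \<sigma>)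
  then have p: "\<sigma> permutes {0..<length ks}" by simp
  show ?case
  proof
    fix k show "(if k < length ks then map \<sigma> [0..<length ks] ! k else k) = \<sigma> k"
      using permutes_not_in[OF p, of k] by auto
  qed
next
  case (2 \<sigma>)
  then have p: "\<sigma> permutes {0..<length ks}" by simp
  show ?case
    using permutes_image[OF p] permutes_inj_on[OF p]
    by (intro permutations_of_setI) (auto simp: distinct_map)
next
  case (3 xs)
  then have "length xs = length ks"
    using length_finite_permutations_of_set[OF 3] by simp
  then show ?case by (intro nth_equalityI) auto
next
  case (4 xs)
  have len: "length xs = length ks"
    using length_finite_permutations_of_set[OF 4] by simp
  have st: "set xs = {0..<length ks}" and dis: "distinct xs" using permutations_of_setD[OF 4] by auto
  let ?p = "\<lambda>k. if k < length ks then xs ! k else k"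
  have "bij_betw ?p {0..<length ks} {0..<length ks}"
  proof (rule bij_betw_imageI)
    show "inj_on ?p {0..<length ks}"
      using dis len by (auto simp: inj_on_def nth_eq_iff_index_eq)
    show "?p ` {0..<length ks} = {0..<length ks}"
    proof
      show "?p ` {0..<length ks} \<subseteq> {0..<length ks}"
        using st len nth_mem[of _ xs] by auto
      show "{0..<length ks} \<subseteq> ?p ` {0..<length ks}"
      proof
        fix x assume "x \<in> {0..<length ks}"
        then have "x \<in> set xs" using st by simp
        then obtain k where "k < length xs" "xs ! k = x" by (auto simp: in_set_conv_nth)
        then show "x \<in> ?p ` {0..<length ks}" using len by (intro image_eqI[of _ _ k]) auto
      qed
    qed
  qed
  then have "?p permutes {0..<length ks}"
    by (rule bij_imp_permutes) auto
  then show ?case by simp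
next
  case (5 \<sigma>)
  then show ?case by (simp add: o_def)
qed

theorem lemma3p1:
  fixes ks :: "nat list"
  assumes "\<forall>k\<in>set ks. k > 0"
  shows "(\<Sum>\<sigma>\<in>{\<sigma>. \<sigma> permutes {0..<length ks}}.
            word (zword (map (\<lambda>i. ks ! \<sigma> i) [0..<length ks])))
       = (\<Sum>P\<in>{P. partition_on {0..<length ks} P}.
            hsmult (cPi P) (tprod_list (map (zblock ks) (blocks_list P))))"
proof -
  have pos: "\<forall>i\<in>{0..<length ks}. ks ! i > 0" using assms by auto
  show ?thesis
    unfolding LHS_Perm RHS_def[symmetric] RHS_Perm[OF finite_atLeastLessThan pos] ..
qed

end
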